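(* Let $r_1,r_2,r_3,L>0$ with $r_2>\max(r_1,r_3)$, let $m(y)=r_1\mathbf 1_{y<0}+r_2\mathbf 1_{0\le y<1}+r_3\mathbf 1_{y\ge1}$, let $c_A>2\sqrt{r_1}$, and let $c\in(2\sqrt{r_1},c_A)$, $\eta>0$, $S>0$, $R>1$, $\gamma>0$. Let $\lambda(c)=\frac12(c-\sqrt{c^2-4r_1})$. Let $\varphi_1^R$ be the principal Dirichlet eigenfunction on $(-R,R)$, i.e. the positive solution in $W^{2,1}((-R,R))$ of $-L^{-2}(\varphi_1^R)''-m\varphi_1^R=\lambda_1^R\varphi_1^R$ in $(-R,R)$ with $\varphi_1^R(\pm R)=0$, normalized by $\varphi_1^R(0)=1$ and extended by $0$ outside $(-R,R)$. For $x_0\in\mathbb{R}$ set $$P(t,x)=e^{-\lambda(c)(x-ct-x_0)}-Se^{-(\lambda(c)+\eta)(x-ct-x_0)},\qquad Q(t,x)=\gamma e^{-\lambda(c)(c_A-c)t}e^{-\frac{c_A(x-c_At)}{2}}\varphi_1^R\Big(\frac{x-c_At}{L}\Big).$$ Then there exists $x_0\in\mathbb{R}$ such that for all $t\ge0$ the equation $P(t,x)=Q(t,x)$ admits an isolated solution $X(t)\in\mathbb{R}$ such that: (a) $\partial_xP(t,X(t))<0$; (b) $\partial_xQ(t,X(t))>0$; (c) $c_At-RL<X(t)<c_At$; (d) $\frac{\ln S}{\eta}<\inf_{t\ge0}X(t)-ct-x_0$. Moreover, (e) $X\in\mathcal C^1([0,+\infty),(-RL,+\infty))$, and (f) $X(t)=c_At+O(1)$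 as $t\to+\infty$. *)

theory Defs
  imports "HOL-Analysis.Analysis" "HOL-Library.Landau_Symbols"
begin

definition mfun :: "real \<Rightarrow> real \<Rightarrow> real \<Rightarrow> real \<Rightarrow> real" where
  "mfun r1 r2 r3 y = (if y < 0 then r1 else if y < 1 then r2 else r3)"

definition lam :: "real \<Rightarrow> real \<Rightarrow> real" where
  "lam r1 c = (c - sqrt (c^2 - 4 * r1)) / 2"

definition Pfun :: "real \<Rightarrow> real \<Rightarrow> real \<Rightarrow> real \<Rightarrow> real \<Rightarrow> real \<Rightarrow> real \<Rightarrow> real" where
  "Pfun r1 c \<eta> S x0 t x =
     exp (- lam r1 c * (x - c * t - x0)) - S * exp (- (lam r1 c + \<eta>) * (x - c * t - x0))"

definition Qfun :: "real \<Rightarrow> real \<Rightarrow> real \<Rightarrow> real \<Rightarrow> real \<Rightarrow> (real \<Rightarrow> real) \<Rightarrow> real \<Rightarrow> real \<Rightarrow> real" where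
  "Qfun r1 c cA \<gamma> L \<phi> t x =
     \<gamma> * exp (- lam r1 c * (cA - c) * t) * exp (- cA * (x - cA * t) / 2) * \<phi> ((x - cA * t) / L)"

text \<open>phi is the principal Dirichlet eigenfunction on (-R,R) of
  -L^{-2} phi'' - m phi = lambda1 phi, positive, in W^{2,1} (i.e. C^1 on (-R,R) with phi''
  existing off the jump points 0 and 1 of m), phi(+-R)=0, phi(0)=1, extended by 0.\<close>
definition principal_eigenfunction ::
  "real \<Rightarrow> real \<Rightarrow> real \<Rightarrow> real \<Rightarrow> real \<Rightarrow> real \<Rightarrow> (real \<Rightarrow> real) \<Rightarrow> bool" where
  "principal_eigenfunction r1 r2 r3 L R lam1 \<phi> \<longleftrightarrow>
     continuous_on {-R..R} \<phi> \<and>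
     (\<forall>y. (y \<le> -R \<or> R \<le> y) \<longrightarrow> \<phi> y = 0) \<and>
     (\<forall>y\<in>{-R<..<R}. \<phi> y > 0) \<and>
     \<phi> 0 = 1 \<and>
     (\<exists>d\<phi> dd\<phi>.
        (\<forall>y\<in>{-R<..<R}. (\<phi> has_real_derivative d\<phi> y) (at y)) \<and>
        continuous_on {-R<..<R} d\<phi> \<and>
        (\<forall>y\<in>{-R<..<R} - {0, 1}.
            (d\<phi> has_real_derivative dd\<phi> y) (at y) \<and>
            - (dd\<phi> y) / L^2 - mfun r1 r2 r3 y * \<phi> y = lam1 * \<phi> y))"

end

theory Submission
  imports Defs
begin

lemma small_near_left:
  fixes \<phi> :: "real \<Rightarrow> real"
  assumes "continuous_on {-R..R} \<phi>" "\<phi> (-R) = 0" "0 < R" "0 < \<epsilon>" "-R < a"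
  shows "\<exists>y0. -R < y0 \<and> y0 < a \<and> (\<forall>y. -R < y \<and> y \<le> y0 \<longrightarrow> \<phi> y < \<epsilon>)"
proof -
  have "-R \<in> {-R..R}" using assms by auto
  then obtain d where d: "d > 0" "\<forall>y\<in>{-R..R}. dist y (-R) < d \<longrightarrow> dist (\<phi> y) (\<phi> (-R)) < \<epsilon>"
    using assms(1,4) unfolding continuous_on_iff by metis
  define mm where "mm = min d (min (a + R) (2*R))"
  have mm: "mm \<le> d" "mm \<le> a + R" "mm \<le> 2*R" "mm > 0" using d assms by (auto simp: mm_def)
  define y0 where "y0 = -R + mm / 2"
  show ?thesis
  proof (intro exI conjI allI impI)
    show "-R < y0" using mm by (simp add: y0_def)
    show "y0 < a" using mm by (simp add: y0_def)
    fix y assume y: "-R < y \<and> y \<le> y0"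
    have "y \<le> -R + d/2" "y \<le> R" using y mm unfolding y0_def by linarith+
    then have "y \<in> {-R..R}" "dist y (-R) < d" using d assms y
      by (auto simp: dist_real_def)
    then show "\<phi> y < \<epsilon>" using d assms(2) by (auto simp: dist_real_def)
  qed
qed

lemma isolated_root:
  fixes f :: "real \<Rightarrow> real"
  assumes "(f has_real_derivative D) (at x)" "D < 0"
  shows "\<exists>\<delta>>0. \<forall>y. 0 < \<bar>y - x\<bar> \<and> \<bar>y - x\<bar> < \<delta> \<longrightarrow> f y \<noteq> f x"
proof -
  obtain d1 where d1: "d1 > 0" "\<forall>h>0. h < d1 \<longrightarrow> f x < f (x - h)"
    using DERIV_neg_dec_left[OF assms] by blast
  obtain d2 where d2: "d2 > 0" "\<forall>h>0. h < d2 \<longrightarrow> f x > f (x + h)"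
    using DERIV_neg_dec_right[OF assms] by blast
  show ?thesis
  proof (intro exI[of _ "min d1 d2"] conjI allI impI)
    show "min d1 d2 > 0" using d1 d2 by simp
    fix y assume y: "0 < \<bar>y - x\<bar> \<and> \<bar>y - x\<bar> < min d1 d2"
    show "f y \<noteq> f x"
    proof (cases "y < x")
      case True
      then have "f x < f (x - (x - y))" using d1(2)[rule_format, of "x - y"] y by auto
      then show ?thesis by simp
    next
      case False
      then have "f x > f (x + (y - x))" using d2(2)[rule_format, of "y - x"] y by auto
      then show ?thesis by simp
    qed
  qed
qed

lemma psi_large:
  fixes \<phi> d\<phi> :: "real \<Rightarrow> real"
  assumes R: "0 < R" and cont: "continuous_on {-R..R} \<phi>" and bd: "\<phi> (-R) = 0"
    and pos: "\<forall>y\<in>{-R<..<R}. \<phi> y > 0"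
    and der: "\<forall>y\<in>{-R<..<R}. (\<phi> has_real_derivative d\<phi> y) (at y)"
    and der2: "\<forall>y\<in>{-R<..<0}. (d\<phi> has_real_derivative (-\<kappa> * \<phi> y)) (at y)"
  shows "\<exists>\<xi>. -R < \<xi> \<and> \<xi> < 0 \<and> (\<forall>z. -R < z \<and> z \<le> \<xi> \<longrightarrow> d\<phi> z > M * \<phi> z)"
proof -
  define N where "N = \<bar>M\<bar> + \<bar>\<kappa>\<bar> * R + 1"
  have N0: "N > 0" using R by (simp add: N_def add_nonneg_pos)
  have "\<exists>\<xi>. -R < \<xi> \<and> \<xi> \<le> -R/2 \<and> d\<phi> \<xi> > N * \<phi> \<xi>"
  proof (rule ccontr)
    assume H0: "\<not> ?thesis"
    have H: "d\<phi> y \<le> N * \<phi> y" if "-R < y" "y \<le> -R/2" for y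
      using H0 that by force
    have p2: "\<phi> (-R/2) > 0" using pos R by auto
    define c0 where "c0 = \<phi> (-R/2) * exp (-N*R)"
    have c0: "c0 > 0" using p2 by (simp add: c0_def)
    obtain y0 where y0: "-R < y0" "y0 < -R/2" "\<forall>y. -R < y \<and> y \<le> y0 \<longrightarrow> \<phi> y < c0"
      using small_near_left[OF cont bd R c0, of "-R/2"] R by auto
    have h1: "ln (\<phi> y0) - N * y0 \<ge> ln (\<phi> (-R/2)) - N * (-R/2)"
    proof (rule DERIV_nonpos_imp_nonincreasing[of y0 "-R/2" "\<lambda>y. ln (\<phi> y) - N * y"])
      show "y0 \<le> -R/2" using y0 by simp
      fix x assume x: "y0 \<le> x" "x \<le> -R/2"
      then have xin: "x \<in> {-R<..<R}" using y0 R by auto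
      have px: "\<phi> x > 0" using pos xin by auto
      have "((\<lambda>y. ln (\<phi> y) - N * y) has_real_derivative (d\<phi> x / \<phi> x - N)) (at x)"
        using der xin px by (auto intro!: derivative_eq_intros simp: field_simps)
      moreover have "d\<phi> x / \<phi> x - N \<le> 0"
        using H[of x] x y0 px by (simp add: divide_le_eq)
      ultimately show "\<exists>y. ((\<lambda>y. ln (\<phi> y) - N * y) has_real_derivative y) (at x) \<and> y \<le> 0" by blast
    qed
    have h2: "N * (-R) < N * y0" using y0 N0 by (intro mult_strict_left_mono) auto
    have "ln (\<phi> y0) \<ge> ln (\<phi> (-R/2)) - N * R"
    proof -
      have "N * (-R/2) = -(N*R)/2" "N * (-R) = -(N*R)" by (simp_all add: algebra_simps)
      then show ?thesis using h1 h2 mult_pos_pos[OF N0 R] by linarith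
    qed
    then have "exp (ln (\<phi> y0)) \<ge> exp (ln (\<phi> (-R/2)) - N * R)" by simp
    moreover have "\<phi> y0 > 0" using pos y0 R by auto
    ultimately have "\<phi> y0 \<ge> c0" using p2 by (simp add: c0_def exp_diff exp_minus field_simps)
    then show False using y0 by auto
  qed
  then obtain \<xi> where xi: "-R < \<xi>" "\<xi> \<le> -R/2" "d\<phi> \<xi> > N * \<phi> \<xi>" by blast
  show ?thesis
  proof (intro exI[of _ \<xi>] conjI allI impI)
    show "-R < \<xi>" "\<xi> < 0" using xi R by auto
    fix z assume z: "-R < z \<and> z \<le> \<xi>"
    have "d\<phi> z / \<phi> z - \<bar>\<kappa>\<bar> * z \<ge> d\<phi> \<xi> / \<phi> \<xi> - \<bar>\<kappa>\<bar> * \<xi>"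
    proof (rule DERIV_nonpos_imp_nonincreasing[of z \<xi> "\<lambda>y. d\<phi> y / \<phi> y - \<bar>\<kappa>\<bar> * y"])
      show "z \<le> \<xi>" using z by simp
      fix x assume x: "z \<le> x" "x \<le> \<xi>"
      then have xin: "x \<in> {-R<..<R}" "x \<in> {-R<..<0}" using z xi R by auto
      have px: "\<phi> x > 0" using pos xin by auto
      have "((\<lambda>y. d\<phi> y / \<phi> y - \<bar>\<kappa>\<bar> * y) has_real_derivative
           ((-\<kappa> * \<phi> x) * \<phi> x - d\<phi> x * d\<phi> x) / (\<phi> x * \<phi> x) - \<bar>\<kappa>\<bar> * 1) (at x)"
      proof (rule DERIV_diff)
        have d1: "(d\<phi> has_real_derivative -\<kappa>*\<phi> x) (at x)" using der2 xin by auto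
        have d2: "(\<phi> has_real_derivative d\<phi> x) (at x)" using der xin by auto
        show "((\<lambda>y. d\<phi> y / \<phi> y) has_real_derivative
           ((-\<kappa> * \<phi> x) * \<phi> x - d\<phi> x * d\<phi> x) / (\<phi> x * \<phi> x)) (at x)"
          using DERIV_divide[OF d1 d2] px by simp
        show "((\<lambda>y. \<bar>\<kappa>\<bar> * y) has_real_derivative \<bar>\<kappa>\<bar> * 1) (at x)"
          by (rule DERIV_cmult) (rule DERIV_ident)
      qed
      moreover have "((-\<kappa> * \<phi> x) * \<phi> x - d\<phi> x * d\<phi> x) / (\<phi> x * \<phi> x) - \<bar>\<kappa>\<bar> * 1 \<le> 0"
      proof -
        have "(-\<kappa> * \<phi> x) * \<phi> x - d\<phi> x * d\<phi> x \<le> \<bar>\<kappa>\<bar> * (\<phi> x * \<phi> x)"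
        proof -
          have "-\<kappa>*(\<phi> x * \<phi> x) \<le> \<bar>\<kappa>\<bar>*(\<phi> x * \<phi> x)" by (rule mult_right_mono) auto
          moreover have "d\<phi> x * d\<phi> x \<ge> 0" by simp
          moreover have "(-\<kappa> * \<phi> x) * \<phi> x = -\<kappa>*(\<phi> x * \<phi> x)" by (simp add: algebra_simps)
          ultimately show ?thesis by linarith
        qed
        then show ?thesis using px by (simp add: divide_le_eq)
      qed
      ultimately show "\<exists>y. ((\<lambda>y. d\<phi> y / \<phi> y - \<bar>\<kappa>\<bar> * y) has_real_derivative y) (at x) \<and> y \<le> 0" by blast
    qed
    moreover have "\<bar>\<kappa>\<bar> * \<xi> - \<bar>\<kappa>\<bar> * z \<le> \<bar>\<kappa>\<bar> * R"
    proof -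
      have "\<bar>\<kappa>\<bar> * (\<xi> - z) \<le> \<bar>\<kappa>\<bar> * R" using z xi R by (intro mult_left_mono) auto
      then show ?thesis by (simp add: algebra_simps)
    qed
    moreover have "d\<phi> \<xi> / \<phi> \<xi> > N" using xi pos R by (simp add: less_divide_eq)
    moreover have "M \<le> \<bar>M\<bar>" by simp
    ultimately have "d\<phi> z / \<phi> z > M" unfolding N_def by linarith
    moreover have "\<phi> z > 0" using pos z xi R by auto
    ultimately show "d\<phi> z > M * \<phi> z" by (simp add: less_divide_eq)
  qed
qed

theorem lemma3p4:
  fixes r1 r2 r3 L cA c \<eta> S R \<gamma> lam1 :: real and \<phi> :: "real \<Rightarrow> real"
  assumes "r1 > 0" "r2 > 0" "r3 > 0" "L > 0"
    and "r2 > max r1 r3"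
    and "cA > 2 * sqrt r1"
    and "2 * sqrt r1 < c" "c < cA"
    and "\<eta> > 0" "S > 0" "R > 1" "\<gamma> > 0"
    and "principal_eigenfunction r1 r2 r3 L R lam1 \<phi>"
  shows "\<exists>x0 X.
     (\<forall>t\<ge>0.
        Pfun r1 c \<eta> S x0 t (X t) = Qfun r1 c cA \<gamma> L \<phi> t (X t) \<and>
        (\<exists>\<delta>>0. \<forall>x. 0 < \<bar>x - X t\<bar> \<and> \<bar>x - X t\<bar> < \<delta> \<longrightarrow>
                  Pfun r1 c \<eta> S x0 t x \<noteq> Qfun r1 c cA \<gamma> L \<phi> t x) \<and>
        (\<exists>D. ((\<lambda>x. Pfun r1 c \<eta> S x0 t x) has_real_derivative D) (at (X t)) \<and> D < 0) \<and>
        (\<exists>D. ((\<lambda>x. Qfun r1 c cA \<gamma> L \<phi> t x) has_real_derivative D) (at (X t)) \<and> D > 0) \<and>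
        cA * t - R * L < X t \<and> X t < cA * t) \<and>
     (\<exists>b. ln S / \<eta> < b \<and> (\<forall>t\<ge>0. b \<le> X t - c * t - x0)) \<and>
     (\<exists>X'. (\<forall>t\<ge>0. (X has_real_derivative X' t) (at t within {0..})) \<and>
           continuous_on {0..} X' \<and> (\<forall>t\<ge>0. - R * L < X t)) \<and>
     (\<lambda>t. X t - cA * t) \<in> O[at_top](\<lambda>_. 1)"
proof -
  note pe = assms(13)[unfolded principal_eigenfunction_def]
  have L0: "L > 0" and eta0: "\<eta> > 0" and S0: "S > 0" and g0: "\<gamma> > 0" using assms by auto
  have contphi: "continuous_on {-R..R} \<phi>" and zero: "\<forall>y. (y \<le> -R \<or> R \<le> y) \<longrightarrow> \<phi> y = 0"
    and pos: "\<forall>y\<in>{-R<..<R}. \<phi> y > 0" using pe by auto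
  obtain d\<phi> dd\<phi> where dphi: "\<forall>y\<in>{-R<..<R}. (\<phi> has_real_derivative d\<phi> y) (at y)"
    and cdphi: "continuous_on {-R<..<R} d\<phi>"
    and eq: "\<forall>y\<in>{-R<..<R} - {0, 1}. (d\<phi> has_real_derivative dd\<phi> y) (at y) \<and>
            - (dd\<phi> y) / L^2 - mfun r1 r2 r3 y * \<phi> y = lam1 * \<phi> y"
    using pe by blast
  have R0: "R > 0" using assms by simp
  have bd: "\<phi> (-R) = 0" using zero by simp
  define \<kappa> where "\<kappa> = L^2 * (lam1 + r1)"
  have der2: "\<forall>y\<in>{-R<..<0}. (d\<phi> has_real_derivative (-\<kappa> * \<phi> y)) (at y)"
  proof
    fix y assume y: "y \<in> {-R<..<0}"
    then have "y \<in> {-R<..<R} - {0,1}" using R0 by auto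
    with eq have e: "(d\<phi> has_real_derivative dd\<phi> y) (at y)"
      "- (dd\<phi> y) / L^2 - mfun r1 r2 r3 y * \<phi> y = lam1 * \<phi> y" by auto
    have "mfun r1 r2 r3 y = r1" using y by (simp add: mfun_def)
    then have "dd\<phi> y = -\<kappa> * \<phi> y" using e(2) L0 by (simp add: \<kappa>_def field_simps)
    with e(1) show "(d\<phi> has_real_derivative (-\<kappa> * \<phi> y)) (at y)" by simp
  qed
  define M where "M = L * cA / 2"
  obtain \<xi> where xi: "-R < \<xi>" "\<xi> < 0" "\<forall>z. -R < z \<and> z \<le> \<xi> \<longrightarrow> d\<phi> z > M * \<phi> z"
    using psi_large[OF R0 contphi bd pos dphi der2, of M] by blast
  define lm where "lm = lam r1 c"
  have c0: "c > 0" using assms(7) real_sqrt_ge_zero[of r1] assms(1) by linarith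
  have lm0: "lm > 0"
  proof -
    have "sqrt (c^2 - 4*r1) < sqrt (c^2)" using assms(1) by (intro real_sqrt_less_mono) simp
    then have "sqrt (c^2 - 4*r1) < c" using c0 by simp
    then show ?thesis by (simp add: lm_def lam_def)
  qed
  define a where "a = lm - cA/2"
  define G where "G y = \<gamma> * exp (a*L*y) * \<phi> y" for y
  define Gd where "Gd y = \<gamma> * exp (a*L*y) * (a*L*\<phi> y + d\<phi> y)" for y
  define \<rho> where "\<rho> = (lm + 2*\<eta>) / (2*(lm+\<eta>))"
  have rho: "0 < \<rho>" "\<rho> < 1" "1 - \<rho> = lm / (2*(lm+\<eta>))" "lm * \<rho> \<ge> \<eta> * (1 - \<rho>)"
    using lm0 eta0 by (auto simp: \<rho>_def field_simps)
  define B0 where "B0 = ln (S / (1 - \<rho>)) / \<eta>"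
  define E where "E = exp (\<bar>a\<bar>*L*R)"
  define \<epsilon>1 where "\<epsilon>1 = exp (-lm * (B0 + R*L))"
  have E0: "E > 0" by (simp add: E_def)
  have Gle: "G y \<le> \<gamma> * E * \<phi> y" if "-R < y" "y < R" for y
  proof -
    have "a*L*y \<le> \<bar>a\<bar>*L*R"
    proof -
      have "a*L*y \<le> \<bar>a*L*y\<bar>" by simp
      also have "\<dots> = \<bar>a\<bar>*L*\<bar>y\<bar>" using L0 by (simp add: abs_mult)
      also have "\<dots> \<le> \<bar>a\<bar>*L*R" using that L0 by (intro mult_left_mono) (auto intro: mult_nonneg_nonneg)
      finally show ?thesis .
    qed
    then have "exp (a*L*y) \<le> E" by (simp add: E_def)
    moreover have "\<phi> y > 0" using pos that by auto
    ultimately show ?thesis unfolding G_def using g0 by (simp add: mult_right_mono)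
  qed
  have Gpos: "G y > 0" if "-R < y" "y < R" for y
    using pos that g0 by (simp add: G_def)
  have Gder: "(G has_real_derivative Gd y) (at y)" if "-R < y" "y < R" for y
  proof -
    have "(\<phi> has_real_derivative d\<phi> y) (at y)" using dphi that by auto
    then show ?thesis unfolding G_def[abs_def] Gd_def
      by (auto intro!: derivative_eq_intros simp: algebra_simps)
  qed
  have Gcont: "continuous_on {u..v} G" if "-R < u" "v < R" for u v
    using that by (intro DERIV_atLeastAtMost_imp_continuous_on) (metis Gder order_less_le_trans order_le_less_trans)
  have Gdbig: "Gd y > lm * L * G y" if "-R < y" "y \<le> \<xi>" for y
  proof -
    have "d\<phi> y > M * \<phi> y" using xi that by auto
    then have "a*L*\<phi> y + d\<phi> y > lm * L * \<phi> y" by (simp add: M_def a_def algebra_simps)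
    then show ?thesis unfolding Gd_def G_def using g0
      by (simp add: mult_strict_left_mono mult.assoc mult.left_commute[of lm])
  qed
  obtain ys where ys: "-R < ys" "ys < \<xi>" "\<forall>y. -R < y \<and> y \<le> ys \<longrightarrow> \<phi> y < \<epsilon>1 / (\<gamma> * E)"
    using small_near_left[OF contphi bd R0, of "\<epsilon>1 / (\<gamma> * E)" \<xi>] xi g0 E0 by (auto simp: \<epsilon>1_def)
  have Gys: "G ys < \<epsilon>1"
  proof -
    have "G ys \<le> \<gamma> * E * \<phi> ys" using Gle ys xi by auto
    also have "\<dots> < \<gamma> * E * (\<epsilon>1 / (\<gamma> * E))" using ys g0 E0 by (intro mult_strict_left_mono) auto
    finally show ?thesis using g0 E0 by simp
  qed
  have Gys0: "G ys > 0" using Gpos ys xi by auto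
  obtain ya where ya: "-R < ya" "ya < ys" "\<forall>y. -R < y \<and> y \<le> ya \<longrightarrow> \<phi> y < \<rho> * G ys / (\<gamma> * E)"
    using small_near_left[OF contphi bd R0, of "\<rho> * G ys / (\<gamma> * E)" ys] ys g0 E0 Gys0 rho by auto
  have Gya: "G ya < \<rho> * G ys"
  proof -
    have "G ya \<le> \<gamma> * E * \<phi> ya" using Gle ya ys xi by auto
    also have "\<dots> < \<gamma> * E * (\<rho> * G ys / (\<gamma> * E))" using ya g0 E0 by (intro mult_strict_left_mono) auto
    finally show ?thesis using g0 E0 by simp
  qed
  obtain ym where ym: "ya \<le> ym" "ym \<le> ys" "G ym = \<rho> * G ys"
    using IVT'[of G ya "\<rho> * G ys" ys] Gya Gcont[of ya ys] ya ys xi rho Gys0 by auto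
  have ym2: "ym < ys" "-R < ym"
  proof -
    have "ym \<noteq> ys" using ym(3) rho Gys0 by auto
    then show "ym < ys" using ym by simp
    show "-R < ym" using ym ya by simp
  qed
  have Gmono: "G ym \<le> G y \<and> G y \<le> G ys" if "ym \<le> y" "y \<le> ys" for y
  proof -
    have nd: "\<exists>D. (G has_real_derivative D) (at x) \<and> D \<ge> 0" if "ym \<le> x" "x \<le> ys" for x
    proof -
      have x: "-R < x" "x < R" "x \<le> \<xi>" using that ym2 ys xi R0 by auto
      have "Gd x > lm * L * G x" using Gdbig x by auto
      moreover have "lm * L * G x > 0" using lm0 L0 Gpos x by auto
      ultimately show ?thesis using Gder x by (intro exI[of _ "Gd x"]) auto
    qed
    show ?thesis
      using DERIV_nonneg_imp_nondecreasing[of ym y G] DERIV_nonneg_imp_nondecreasing[of y ys G] nd that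
      by auto
  qed
  define x0 where "x0 = ln (G ys) / lm"
  define K where "K = 1 / G ys"
  have ex0: "exp (lm * x0) = G ys" using lm0 Gys0 by (simp add: x0_def)
  have KG: "\<rho> \<le> K * G y \<and> K * G y \<le> 1" if "ym \<le> y" "y \<le> ys" for y
    using Gmono[OF that] ym(3) Gys0 by (auto simp: K_def field_simps)
  define W where "W y = (1 - K * G y) * exp (\<eta> * (L*y - x0)) / S" for y
  define Wd where "Wd y = (- K * Gd y + \<eta> * L * (1 - K * G y)) * exp (\<eta> * (L*y - x0)) / S" for y
  have Wder: "(W has_real_derivative Wd y) (at y)" if "-R < y" "y < R" for y
    using Gder[OF that] S0 unfolding W_def[abs_def] Wd_def
    by (auto intro!: derivative_eq_intros simp: field_simps power2_eq_square)
  have Wdneg: "Wd y < 0" if "ym \<le> y" "y \<le> ys" for y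
  proof -
    have y: "-R < y" "y \<le> \<xi>" using that ym2 ys by auto
    have K0: "K > 0" using Gys0 by (simp add: K_def)
    have f1: "K * Gd y > K * (lm * L * G y)" using Gdbig[OF y] K0 by simp
    have f2: "K * (lm * L * G y) = lm * L * (K * G y)" by simp
    have f3: "lm * L * (K * G y) \<ge> lm * L * \<rho>" using KG[OF that] lm0 L0 by (intro mult_left_mono) auto
    have f4: "lm * L * \<rho> \<ge> \<eta> * L * (1 - \<rho>)"
    proof -
      have "\<eta>*(1-\<rho>)*L \<le> lm*\<rho>*L" by (rule mult_right_mono[OF rho(4)]) (use L0 in simp)
      then show ?thesis by (simp only: mult_ac)
    qed
    have f5: "\<eta> * L * (1 - \<rho>) \<ge> \<eta> * L * (1 - K * G y)" using KG[OF that] eta0 L0 by (intro mult_left_mono) auto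
    from f1 f2 f3 f4 f5 have "- K * Gd y + \<eta> * L * (1 - K * G y) < 0" by linarith
    then show ?thesis unfolding Wd_def using S0 by (simp add: divide_neg_pos mult_neg_pos)
  qed
  have Wys: "W ys = 0" using Gys0 by (simp add: W_def K_def)
  define b where "b = L * ym - x0"
  have bB0: "b > B0"
  proof -
    have "ln (G ys) < ln \<epsilon>1" using Gys Gys0 by simp
    then have "ln (G ys) < -lm * (B0 + R*L)" by (simp add: \<epsilon>1_def)
    moreover have "-lm * (B0 + R*L) = (-(B0 + R*L)) * lm" by (simp add: algebra_simps)
    ultimately have "ln (G ys) < (-(B0 + R*L)) * lm" by linarith
    then have "x0 < -(B0 + R*L)" unfolding x0_def using pos_divide_less_eq[OF lm0] by blast
    moreover have "L * ym > - (R * L)"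
    proof -
      have "L * (-R) < L * ym" using ym2 L0 by (intro mult_strict_left_mono) auto
      then show ?thesis by (simp add: mult.commute)
    qed
    ultimately show ?thesis by (simp add: b_def)
  qed
  have Wym: "W ym > 1"
  proof -
    have "\<eta> * b > ln (S / (1 - \<rho>))" using bB0 eta0 by (simp add: B0_def pos_divide_less_eq mult.commute)
    then have "exp (ln (S / (1 - \<rho>))) < exp (\<eta> * b)" by (simp only: exp_less_cancel_iff)
    moreover have "S / (1 - \<rho>) > 0" using S0 rho(2) by simp
    ultimately have "exp (\<eta> * b) > S / (1 - \<rho>)" by simp
    then have "(1 - \<rho>) * exp (\<eta> * b) > S" using rho(2) by (simp add: divide_less_eq mult.commute)
    moreover have "K * G ym = \<rho>" using ym(3) Gys0 by (simp add: K_def)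
    ultimately show ?thesis using S0 by (simp add: W_def b_def)
  qed
  have lnSb: "ln S / \<eta> < b"
  proof -
    have "ln S \<le> ln (S / (1 - \<rho>))" using S0 rho(1,2) by (simp add: le_divide_eq)
    then have "ln S / \<eta> \<le> B0" using eta0 by (simp add: B0_def divide_right_mono)
    then show ?thesis using bB0 by simp
  qed
  have Wcont: "continuous_on {ym..ys} W"
  proof (rule DERIV_atLeastAtMost_imp_continuous_on)
    fix x assume "ym \<le> x" "x \<le> ys"
    then show "\<exists>y. (W has_real_derivative y) (at x)" using Wder[of x] ym2 ys xi by auto
  qed
  have Wdec: "W v < W u" if "ym \<le> u" "u < v" "v \<le> ys" for u v
  proof -
    have "W u > W v"
    proof (rule DERIV_neg_imp_decreasing[of u v W])
      show "u < v" by fact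
      fix x assume "u \<le> x" "x \<le> v"
      then have "ym \<le> x" "x \<le> ys" "-R < x" "x < R" using that ym2 ys xi by auto
      then show "\<exists>y. (W has_real_derivative y) (at x) \<and> y < 0" using Wder Wdneg by blast
    qed
    then show ?thesis by simp
  qed
  have injW: "inj_on W {ym..ys}"
  proof (rule inj_onI)
    fix u v assume uv: "u \<in> {ym..ys}" "v \<in> {ym..ys}" "W u = W v"
    show "u = v"
    proof (rule ccontr)
      assume "u \<noteq> v"
      then consider "u < v" | "v < u" by linarith
      then show False using Wdec[of u v] Wdec[of v u] uv by cases auto
    qed
  qed
  define ginv where "ginv = inv_into {ym..ys} W"
  define Wm where "Wm = W ym"
  have Wm1: "Wm > 1" using Wym by (simp add: Wm_def)
  have img: "v \<in> W ` {ym..ys}" if hv: "0 \<le> v" "v \<le> Wm" for v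
  proof -
    obtain x where "ym \<le> x" "x \<le> ys" "W x = v"
    proof -
      have "v \<le> W ym" using hv by (simp add: Wm_def)
      then have "\<exists>x. ym \<le> x \<and> x \<le> ys \<and> W x = v"
        using IVT2'[where f=W and a=ym and b=ys and y=v] Wys Wcont hv(1) ym2 by auto
      then show ?thesis using that by blast
    qed
    then show ?thesis by (auto intro: rev_image_eqI)
  qed
  have ginv_prop: "W (ginv v) = v \<and> ym < ginv v \<and> ginv v < ys" if "0 < v" "v < Wm" for v
  proof -
    have "v \<in> W ` {ym..ys}" using img that by auto
    then have 1: "W (ginv v) = v" "ginv v \<in> {ym..ys}" unfolding ginv_def
      by (rule f_inv_into_f, rule inv_into_into)
    have "ginv v \<noteq> ys" using 1 Wys that by auto
    moreover have "ginv v \<noteq> ym" using 1 that by (auto simp: Wm_def)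
    ultimately show ?thesis using 1 by auto
  qed
  have ginvcont: "continuous_on {0<..<Wm} ginv"
  proof -
    have "continuous_on (W ` {ym..ys}) ginv" unfolding ginv_def
      by (rule continuous_on_inv[OF Wcont compact_Icc]) (use injW in auto)
    moreover have "{0<..<Wm} \<subseteq> W ` {ym..ys}" using img by auto
    ultimately show ?thesis by (rule continuous_on_subset)
  qed
  have ginvder: "(ginv has_real_derivative inverse (Wd (ginv v))) (at v)" if "0 < v" "v < Wm" for v
  proof (rule DERIV_inverse_function[where a=0 and b=Wm])
    have gv: "ym < ginv v" "ginv v < ys" using ginv_prop that by auto
    show "(W has_real_derivative Wd (ginv v)) (at (ginv v))" using Wder gv ym2 ys xi by auto
    show "Wd (ginv v) \<noteq> 0" using Wdneg[of "ginv v"] gv by auto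
    show "0 < v" "v < Wm" by fact+
    show "\<And>y. 0 < y \<Longrightarrow> y < Wm \<Longrightarrow> W (ginv y) = y" using ginv_prop by auto
    show "isCont ginv v" using ginvcont that continuous_on_eq_continuous_at[of "{0<..<Wm}" ginv] by auto
  qed
  have Wdcont: "continuous_on {-R<..<R} Wd"
  proof -
    have cphi: "continuous_on {-R<..<R} \<phi>" using contphi by (rule continuous_on_subset) auto
    show ?thesis unfolding Wd_def[abs_def] Gd_def G_def using cphi cdphi S0
      by (intro continuous_intros) auto
  qed
  define gd where "gd v = inverse (Wd (ginv v))" for v
  have gdcont: "continuous_on {0<..<Wm} gd"
  proof -
    have "continuous_on {ym<..<ys} (\<lambda>y. inverse (Wd y))"
    proof (rule continuous_on_inverse)
      show "continuous_on {ym<..<ys} Wd" using Wdcont by (rule continuous_on_subset) (use ym2 ys xi in auto)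
      show "\<forall>y\<in>{ym<..<ys}. Wd y \<noteq> 0"
      proof
        fix y assume "y \<in> {ym<..<ys}" then show "Wd y \<noteq> 0" using Wdneg[of y] by auto
      qed
    qed
    moreover have "ginv ` {0<..<Wm} \<subseteq> {ym<..<ys}" using ginv_prop by auto
    ultimately show ?thesis unfolding gd_def[abs_def]
      by (rule continuous_on_compose2[OF _ ginvcont])
  qed
  define wt where "wt t = exp (-(\<eta>*(cA-c))*t)" for t
  define X where "X t = cA*t + L * ginv (wt t)" for t
  have cAc: "cA - c > 0" using assms(8) by simp
  have wtb: "0 < wt t \<and> wt t < Wm" if "t \<ge> 0" for t
  proof -
    have "-(\<eta>*(cA-c))*t \<le> 0" using that eta0 cAc by (simp add: mult_nonneg_nonneg)
    then have "wt t \<le> 1" by (simp add: wt_def)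
    moreover have "wt t > 0" by (simp add: wt_def)
    ultimately show ?thesis using Wm1 by linarith
  qed
  have Yp: "W (ginv (wt t)) = wt t \<and> ym < ginv (wt t) \<and> ginv (wt t) < ys" if "t \<ge> 0" for t
    using ginv_prop wtb[OF that] by auto
  have cA0: "cA > 0" using cAc c0 by simp
  have h1: "\<forall>t\<ge>0.
        Pfun r1 c \<eta> S x0 t (X t) = Qfun r1 c cA \<gamma> L \<phi> t (X t) \<and>
        (\<exists>\<delta>>0. \<forall>x. 0 < \<bar>x - X t\<bar> \<and> \<bar>x - X t\<bar> < \<delta> \<longrightarrow>
                  Pfun r1 c \<eta> S x0 t x \<noteq> Qfun r1 c cA \<gamma> L \<phi> t x) \<and>
        (\<exists>D. ((\<lambda>x. Pfun r1 c \<eta> S x0 t x) has_real_derivative D) (at (X t)) \<and> D < 0) \<and>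
        (\<exists>D. ((\<lambda>x. Qfun r1 c cA \<gamma> L \<phi> t x) has_real_derivative D) (at (X t)) \<and> D > 0) \<and>
        cA * t - R * L < X t \<and> X t < cA * t"
  proof (intro allI impI)
    fix t :: real assume t0: "t \<ge> 0"
    define Yt where "Yt = ginv (wt t)"
    have Yt: "W Yt = wt t" "ym < Yt" "Yt < ys" using Yp[OF t0] by (auto simp: Yt_def)
    have Ytin: "-R < Yt" "Yt < R" "Yt \<le> \<xi>" "Yt < 0" using Yt ym2 ys xi R0 by auto
    define s where "s = X t - c*t - x0"
    have XY: "X t - cA*t = L*Yt" by (simp add: X_def Yt_def)
    have XYL: "(X t - cA*t) / L = Yt" using XY L0 by simp
    have sdef: "s = (cA - c)*t + (L*Yt - x0)" by (simp add: s_def X_def Yt_def algebra_simps)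
    have key: "S * exp (-\<eta> * s) = 1 - K * G Yt"
    proof -
      have e1: "(1 - K*G Yt) * exp (\<eta>*(L*Yt - x0)) = S * exp (-(\<eta>*(cA-c))*t)"
        using Yt(1) S0 by (simp add: W_def wt_def field_simps)
      have e2: "-\<eta> * s = -(\<eta>*(cA-c))*t + -(\<eta>*(L*Yt - x0))" by (simp add: sdef algebra_simps)
      have "S * exp (-\<eta> * s) = S * exp (-(\<eta>*(cA-c))*t) * exp (-(\<eta>*(L*Yt - x0)))"
        by (simp only: e2 exp_add mult.assoc)
      also have "\<dots> = (1 - K*G Yt) * (exp (\<eta>*(L*Yt - x0)) * exp (-(\<eta>*(L*Yt - x0))))"
        by (simp only: e1[symmetric] mult.assoc)
      also have "\<dots> = 1 - K*G Yt" by (simp add: exp_minus_inverse)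
      finally show ?thesis .
    qed
    have KGY: "\<rho> \<le> K * G Yt" using KG[of Yt] Yt by auto
    have Pval: "Pfun r1 c \<eta> S x0 t (X t) = exp (-lm * s) * (K * G Yt)"
    proof -
      have "exp (-(lm+\<eta>) * s) = exp (-lm * s) * exp (-\<eta> * s)"
        by (simp add: exp_add[symmetric] algebra_simps)
      then have "Pfun r1 c \<eta> S x0 t (X t) = exp (-lm * s) * (1 - S * exp (-\<eta> * s))"
        by (simp add: Pfun_def lm_def[symmetric] s_def algebra_simps)
      then show ?thesis using key by simp
    qed
    have Qval: "Qfun r1 c cA \<gamma> L \<phi> t (X t) = \<gamma> * exp (-lm*(cA-c)*t) * exp (-cA*(L*Yt)/2) * \<phi> Yt"
      using L0 by (simp add: Qfun_def lm_def[symmetric] XY XYL)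
    have PQ: "Pfun r1 c \<eta> S x0 t (X t) = Qfun r1 c cA \<gamma> L \<phi> t (X t)"
    proof -
      have s2: "-lm * s = (-lm*(cA-c)*t + -lm*L*Yt) + lm*x0" by (simp add: sdef algebra_simps)
      have "exp (-lm * s) * K = exp (-lm*(cA-c)*t + -lm*L*Yt) * (exp (lm*x0) * K)"
        by (simp only: s2 exp_add mult.assoc)
      also have "exp (lm*x0) * K = 1" using ex0 Gys0 by (simp add: K_def)
      finally have A: "exp (-lm * s) * K = exp (-lm*(cA-c)*t + -lm*L*Yt)" by simp
      have "exp (-lm * s) * (K * G Yt) = (exp (-lm * s) * K) * G Yt" by (simp only: mult.assoc)
      also have "\<dots> = exp (-lm*(cA-c)*t + -lm*L*Yt) * G Yt" by (simp only: A)
      also have "\<dots> = \<gamma> * (exp (-lm*(cA-c)*t + -lm*L*Yt) * exp (a*L*Yt)) * \<phi> Yt"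
        by (simp add: G_def mult_ac)
      also have "exp (-lm*(cA-c)*t + -lm*L*Yt) * exp (a*L*Yt) = exp (-lm*(cA-c)*t) * exp (-cA*(L*Yt)/2)"
        by (simp add: exp_add[symmetric] a_def algebra_simps)
      finally show ?thesis using Pval Qval by (simp add: mult_ac)
    qed
    define Dp where "Dp = -lm*exp(-lm * s) + (lm+\<eta>)*S*exp(-(lm+\<eta>) * s)"
    have Pder: "((\<lambda>x. Pfun r1 c \<eta> S x0 t x) has_real_derivative Dp) (at (X t))"
      unfolding Pfun_def lm_def[symmetric] Dp_def s_def
      by (auto intro!: derivative_eq_intros simp: algebra_simps)
    have Dpneg: "Dp < 0"
    proof -
      have "exp (-(lm+\<eta>) * s) = exp (-lm * s) * exp (-\<eta> * s)"
        by (simp add: exp_add[symmetric] algebra_simps)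
      then have "Dp = exp (-lm * s) * (-lm + (lm+\<eta>) * (S * exp (-\<eta> * s)))"
        by (simp add: Dp_def algebra_simps)
      also have "\<dots> = exp (-lm * s) * (-lm + (lm+\<eta>) * (1 - K * G Yt))" by (simp only: key)
      finally have D1: "Dp = exp (-lm * s) * (-lm + (lm+\<eta>) * (1 - K * G Yt))" .
      have "(lm+\<eta>) * (1 - K * G Yt) \<le> (lm+\<eta>) * (1 - \<rho>)" using KGY lm0 eta0 by (intro mult_left_mono) auto
      also have "\<dots> = lm / 2" using rho(3) lm0 eta0 by (simp add: field_simps)
      finally have "-lm + (lm+\<eta>) * (1 - K * G Yt) < 0" using lm0 by linarith
      then show ?thesis using D1 by (simp add: mult_pos_neg)
    qed
    define C where "C = \<gamma> * exp (-lm*(cA-c)*t)"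
    have C0: "C > 0" using g0 by (simp add: C_def)
    have hphi: "((\<lambda>x. \<phi> ((x - cA*t)/L)) has_real_derivative d\<phi> Yt * (1/L)) (at (X t))"
    proof -
      have d1: "(\<phi> has_real_derivative d\<phi> Yt) (at ((X t - cA*t)/L))" using dphi Ytin XYL by auto
      have d2: "((\<lambda>x. (x - cA*t)/L) has_real_derivative 1/L) (at (X t))"
        using L0 by (auto intro!: derivative_eq_intros)
      show ?thesis using DERIV_chain2[OF d1 d2] by simp
    qed
    have hE: "((\<lambda>x. C * exp (-cA*(x - cA*t)/2)) has_real_derivative
               C * (exp (-cA*(X t - cA*t)/2) * (-cA/2))) (at (X t))"
      by (auto intro!: derivative_eq_intros simp: algebra_simps)
    define Dq where "Dq = C * (exp (-cA*(X t - cA*t)/2) * (-cA/2)) * \<phi> ((X t - cA*t)/L)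
                        + (d\<phi> Yt * (1/L)) * (C * exp (-cA*(X t - cA*t)/2))"
    have Qfun_eq: "(\<lambda>x. Qfun r1 c cA \<gamma> L \<phi> t x) = (\<lambda>x. C * exp (-cA*(x - cA*t)/2) * \<phi> ((x - cA*t)/L))"
      by (simp add: Qfun_def C_def lm_def[symmetric] fun_eq_iff)
    have Qder: "((\<lambda>x. Qfun r1 c cA \<gamma> L \<phi> t x) has_real_derivative Dq) (at (X t))"
      unfolding Qfun_eq Dq_def by (rule DERIV_mult[OF hE hphi])
    have Dqpos: "Dq > 0"
    proof -
      have "Dq = C * exp (-cA*(X t - cA*t)/2) * (d\<phi> Yt / L - cA/2 * \<phi> Yt)"
        by (simp add: Dq_def XYL algebra_simps)
      moreover have "d\<phi> Yt > M * \<phi> Yt" using xi Ytin by auto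
      then have "d\<phi> Yt / L > cA/2 * \<phi> Yt" using L0 by (simp add: M_def less_divide_eq algebra_simps)
      ultimately show ?thesis using C0 by simp
    qed
    have iso: "\<exists>\<delta>>0. \<forall>x. 0 < \<bar>x - X t\<bar> \<and> \<bar>x - X t\<bar> < \<delta> \<longrightarrow>
                  Pfun r1 c \<eta> S x0 t x \<noteq> Qfun r1 c cA \<gamma> L \<phi> t x"
    proof -
      have "((\<lambda>x. Pfun r1 c \<eta> S x0 t x - Qfun r1 c cA \<gamma> L \<phi> t x) has_real_derivative Dp - Dq) (at (X t))"
        by (rule DERIV_diff[OF Pder Qder])
      moreover have "Dp - Dq < 0" using Dpneg Dqpos by simp
      ultimately obtain \<delta> where "\<delta> > 0" "\<forall>y. 0 < \<bar>y - X t\<bar> \<and> \<bar>y - X t\<bar> < \<delta> \<longrightarrow>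
          Pfun r1 c \<eta> S x0 t y - Qfun r1 c cA \<gamma> L \<phi> t y \<noteq>
          Pfun r1 c \<eta> S x0 t (X t) - Qfun r1 c cA \<gamma> L \<phi> t (X t)"
        using isolated_root by blast
      then show ?thesis using PQ by auto
    qed
    have LY1: "L * Yt < 0" using Ytin L0 by (simp add: mult_pos_neg)
    have LY2: "L * (-R) < L * Yt" using Ytin L0 by (intro mult_strict_left_mono) auto
    show "Pfun r1 c \<eta> S x0 t (X t) = Qfun r1 c cA \<gamma> L \<phi> t (X t) \<and>
        (\<exists>\<delta>>0. \<forall>x. 0 < \<bar>x - X t\<bar> \<and> \<bar>x - X t\<bar> < \<delta> \<longrightarrow>
                  Pfun r1 c \<eta> S x0 t x \<noteq> Qfun r1 c cA \<gamma> L \<phi> t x) \<and>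
        (\<exists>D. ((\<lambda>x. Pfun r1 c \<eta> S x0 t x) has_real_derivative D) (at (X t)) \<and> D < 0) \<and>
        (\<exists>D. ((\<lambda>x. Qfun r1 c cA \<gamma> L \<phi> t x) has_real_derivative D) (at (X t)) \<and> D > 0) \<and>
        cA * t - R * L < X t \<and> X t < cA * t"
      using PQ iso Pder Dpneg Qder Dqpos XY LY1 LY2 by (auto simp: algebra_simps)
  qed
  have h2: "\<exists>b. ln S / \<eta> < b \<and> (\<forall>t\<ge>0. b \<le> X t - c * t - x0)"
  proof (intro exI[of _ b] conjI allI impI)
    show "ln S / \<eta> < b" by (rule lnSb)
    fix t :: real assume t0: "t \<ge> 0"
    have "L * ym \<le> L * ginv (wt t)" using Yp[OF t0] L0 by (intro mult_left_mono) auto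
    moreover have "(cA - c) * t \<ge> 0" using cAc t0 by simp
    ultimately show "b \<le> X t - c * t - x0" by (simp add: b_def X_def algebra_simps)
  qed
  define X' where "X' t = cA + L * (gd (wt t) * (exp (-(\<eta>*(cA-c))*t) * (-(\<eta>*(cA-c)))))" for t
  have h3: "\<exists>X'. (\<forall>t\<ge>0. (X has_real_derivative X' t) (at t within {0..})) \<and>
           continuous_on {0..} X' \<and> (\<forall>t\<ge>0. - R * L < X t)"
  proof (intro exI[of _ X'] conjI allI impI)
    fix t :: real assume t0: "t \<ge> 0"
    have wd: "(wt has_real_derivative exp (-(\<eta>*(cA-c))*t) * (-(\<eta>*(cA-c)))) (at t)"
      unfolding wt_def[abs_def] by (auto intro!: derivative_eq_intros)
    have gd1: "(ginv has_real_derivative gd (wt t)) (at (wt t))"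
      using ginvder wtb[OF t0] by (simp add: gd_def)
    have "((\<lambda>t. ginv (wt t)) has_real_derivative gd (wt t) * (exp (-(\<eta>*(cA-c))*t) * (-(\<eta>*(cA-c))))) (at t)"
      by (rule DERIV_chain2[OF gd1 wd])
    then have "(X has_real_derivative X' t) (at t)"
      unfolding X_def[abs_def] X'_def by (auto intro!: derivative_eq_intros)
    then show "(X has_real_derivative X' t) (at t within {0..})"
      by (rule has_field_derivative_at_within)
  next
    have wc: "continuous_on {0..} wt" unfolding wt_def[abs_def] by (intro continuous_intros)
    have "wt ` {0..} \<subseteq> {0<..<Wm}" using wtb by auto
    then have "continuous_on {0..} (\<lambda>t. gd (wt t))" by (rule continuous_on_compose2[OF gdcont wc])
    then show "continuous_on {0..} X'" unfolding X'_def[abs_def] by (intro continuous_intros)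
  next
    fix t :: real assume t0: "t \<ge> 0"
    have "L * (-R) < L * ginv (wt t)" using Yp[OF t0] ym2 L0 by (intro mult_strict_left_mono) auto
    moreover have "cA * t \<ge> 0" using cA0 t0 by simp
    ultimately show "- R * L < X t" by (simp add: X_def algebra_simps)
  qed
  have h4: "(\<lambda>t. X t - cA * t) \<in> O[at_top](\<lambda>_. 1)"
  proof (rule bigoI[where c="R*L"])
    show "eventually (\<lambda>t. norm (X t - cA * t) \<le> R * L * norm (1::real)) at_top"
      unfolding eventually_at_top_linorder
    proof (intro exI[of _ 0] allI impI)
      fix t :: real assume t0: "t \<ge> 0"
      have yb: "-R < ginv (wt t)" "ginv (wt t) < R" using Yp[OF t0] ym2 ys xi R0 by auto
      have "\<bar>ginv (wt t)\<bar> \<le> R" using yb by simp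
      then have "L * \<bar>ginv (wt t)\<bar> \<le> L * R" using L0 by (intro mult_left_mono) auto
      then show "norm (X t - cA * t) \<le> R * L * norm (1::real)"
        by (simp add: X_def abs_mult L0 abs_of_pos mult.commute)
    qed
  qed
  show ?thesis using h1 h2 h3 h4 by blast
qed

end
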